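(* Let $N_{\mathbf u}, N_{\boldsymbol\mu}, N_t, s$ be positive integers. Let $\mathbb M\in\mathbb R^{N_{\mathbf u}\times N_{\mathbf u}}$ be a fixed mass matrix and $\mathbf r:\mathbb R^{N_{\mathbf u}}\times\mathbb R^{N_{\boldsymbol\mu}}\times\mathbb R\to\mathbb R^{N_{\mathbf u}}$ continuously differentiable. Let $(a_{ij})_{1\le i,j\le s}$, $(b_i)$, $(c_i)$ be the coefficients of an $s$-stage diagonally implicit Runge–Kutta (DIRK) scheme ($a_{ij}=0$ for $j>i$), let $\Delta t_1,\dots,\Delta t_{N_t}>0$, $t_0=0$, $t_n=t_{n-1}+\Delta t_n$. Fix $\boldsymbol\mu$ and let $\mathbf u^{(0)},\dots,\mathbf u^{(N_t)}$, $\mathbf k_i^{(n)}$ ($n=1,\dots,N_t$, $i=1,\dots,s$) be a time-periodic solution of the fully discrete equations $$\mathbf u^{(n)}=\mathbf u^{(n-1)}+\sum_{i=1}^s b_i\mathbf k_i^{(n)},\qquad \mathbb M\mathbf k_i^{(n)}=\Delta t_n\,\mathbf r\big(\mathbf u_i^{(n)},\boldsymbol\mu,t_{n-1}+c_i\Delta t_n\big),\qquad \mathbf u_i^{(n)}=\mathbf u^{(n-1)}+\sum_{j=1}^i a_{ij}\mathbf k_j^{(n)},$$ with $\mathbf u^{(0)}=\mathbf u^{(N_t)}$. Let $F$ be a continuously differentiable function of $(\mathbf u^{(0)},\dots,\mathbf u^{(N_t)},\mathbf k_1^{(1)},\dots,\mathbf k_s^{(N_t)},\boldsymbol\mu)$.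 Assume the Jacobian $\frac{\partial\mathbf u^{(N_t)}}{\partial\mathbf u_0}(\mathbf u^{(0)};\boldsymbol\mu)-\mathbf I$ of the time-periodicity residual is non-singular at this periodic solution. Then the linear system (a two-point boundary value problem) for the unknowns $\boldsymbol\lambda^{(0)},\dots,\boldsymbol\lambda^{(N_t)},\boldsymbol\kappa_1^{(1)},\dots,\boldsymbol\kappa_s^{(N_t)}\in\mathbb R^{N_{\mathbf u}}$, $$\boldsymbol\lambda^{(N_t)}=\boldsymbol\lambda^{(0)}+\frac{\partial F}{\partial\mathbf u^{(N_t)}}^T,$$ $$\boldsymbol\lambda^{(n-1)}=\boldsymbol\lambda^{(n)}+\frac{\partial F}{\partial\mathbf u^{(n-1)}}^T+\sum_{i=1}^s\Delta t_n\frac{\partial\mathbf r}{\partial\mathbf u}\big(\mathbf u_i^{(n)},\boldsymbol\mu,t_{n-1}+c_i\Delta t_n\big)^T\boldsymbol\kappa_i^{(n)},$$ $$\mathbb M^T\boldsymbol\kappa_i^{(n)}=\frac{\partial F}{\partial\mathbf k_i^{(n)}}^T+b_i\boldsymbol\lambda^{(n)}+\sum_{j=i}^s a_{ji}\Delta t_n\frac{\partial\mathbf r}{\partial\mathbf u}\big(\mathbf u_j^{(n)},\boldsymbol\mu,t_{n-1}+c_j\Delta t_n\big)^T\boldsymbol\kappa_j^{(n)},$$ for $n=1,\dots,N_t$, $i=1,\dots,s$ (all derivatives of $F$ evaluated at the periodic solution), has a solution, and this solution is unique.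
   Context: For $\mathbf u_0\in\mathbb R^{N_{\mathbf u}}$, $\mathbf u^{(N_t)}(\mathbf u_0;\boldsymbol\mu)$ denotes the state at step $N_t$ obtained by evolving the DIRK recursion above from the initial condition $\mathbf u^{(0)}=\mathbf u_0$ (without imposing periodicity), and $\frac{\partial\mathbf u^{(N_t)}}{\partial\mathbf u_0}$ is its Jacobian with respect to $\mathbf u_0$. It is assumed throughout that the DIRK stage equations and their linearizations are uniquely solvable along the periodic solution, i.e. the matrices $\mathbb M-a_{ii}\Delta t_n\frac{\partial\mathbf r}{\partial\mathbf u}(\mathbf u_i^{(n)},\boldsymbol\mu,t_{n-1}+c_i\Delta t_n)$ are non-singular for all $n,i$, so that the map $\mathbf u_0\mapsto\mathbf u^{(N_t)}(\mathbf u_0;\boldsymbol\mu)$ is differentiable near $\mathbf u^{(0)}$. *)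

theory Defs
  imports "HOL-Analysis.Analysis"
begin

definition tgrid :: "(nat \<Rightarrow> real) \<Rightarrow> nat \<Rightarrow> real" where
  "tgrid dt n = (\<Sum>m = 1..n. dt m)"

definition stage :: "(nat \<Rightarrow> nat \<Rightarrow> real) \<Rightarrow> (nat \<Rightarrow> real^'n) \<Rightarrow> (nat \<Rightarrow> nat \<Rightarrow> real^'n)
    \<Rightarrow> nat \<Rightarrow> nat \<Rightarrow> real^'n" where
  "stage a u k n i = u (n - 1) + (\<Sum>j = 1..i. a i j *\<^sub>R k n j)"

definition dirk_eqs :: "real^'n^'n \<Rightarrow> (real^'n \<Rightarrow> real^'m \<Rightarrow> real \<Rightarrow> real^'n)
    \<Rightarrow> (nat \<Rightarrow> nat \<Rightarrow> real) \<Rightarrow> (nat \<Rightarrow> real) \<Rightarrow> (nat \<Rightarrow> real) \<Rightarrow> (nat \<Rightarrow> real)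
    \<Rightarrow> real^'m \<Rightarrow> nat \<Rightarrow> nat \<Rightarrow> (nat \<Rightarrow> real^'n) \<Rightarrow> (nat \<Rightarrow> nat \<Rightarrow> real^'n) \<Rightarrow> bool" where
  "dirk_eqs M r a b c dt mu Nt s u k \<longleftrightarrow>
     (\<forall>n \<in> {1..Nt}.
        u n = u (n - 1) + (\<Sum>i = 1..s. b i *\<^sub>R k n i) \<and>
        (\<forall>i \<in> {1..s}. M *v k n i =
            dt n *\<^sub>R r (stage a u k n i) mu (tgrid dt (n - 1) + c i * dt n)))"

definition bnorm :: "nat \<Rightarrow> nat \<Rightarrow> (nat \<Rightarrow> real^'n) \<Rightarrow> (nat \<Rightarrow> nat \<Rightarrow> real^'n) \<Rightarrow> real^'m \<Rightarrow> real" where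
  "bnorm Nt s hu hk hm = (\<Sum>n\<le>Nt. norm (hu n)) + (\<Sum>n = 1..Nt. \<Sum>i = 1..s. norm (hk n i)) + norm hm"

definition blin :: "nat \<Rightarrow> nat \<Rightarrow> (nat \<Rightarrow> real^'n) \<Rightarrow> (nat \<Rightarrow> nat \<Rightarrow> real^'n) \<Rightarrow> real^'m
    \<Rightarrow> (nat \<Rightarrow> real^'n) \<Rightarrow> (nat \<Rightarrow> nat \<Rightarrow> real^'n) \<Rightarrow> real^'m \<Rightarrow> real" where
  "blin Nt s gu gk gm hu hk hm =
     (\<Sum>n\<le>Nt. gu n \<bullet> hu n) + (\<Sum>n = 1..Nt. \<Sum>i = 1..s. gk n i \<bullet> hk n i) + gm \<bullet> hm"

text \<open>F is a continuously differentiable function of (u^(0),...,u^(Nt), k_1^(1),...,k_s^(Nt), mu)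
  with partial gradients Gu, Gk, Gm (Frechet differentiability and continuity of the
  gradient w.r.t. the norm bnorm of the finitely many relevant arguments; in particular F
  does not depend on the remaining entries of its function-valued arguments).\<close>
definition F_C1 :: "nat \<Rightarrow> nat
    \<Rightarrow> ((nat \<Rightarrow> real^'n) \<Rightarrow> (nat \<Rightarrow> nat \<Rightarrow> real^'n) \<Rightarrow> real^'m \<Rightarrow> real)
    \<Rightarrow> ((nat \<Rightarrow> real^'n) \<Rightarrow> (nat \<Rightarrow> nat \<Rightarrow> real^'n) \<Rightarrow> real^'m \<Rightarrow> nat \<Rightarrow> real^'n)
    \<Rightarrow> ((nat \<Rightarrow> real^'n) \<Rightarrow> (nat \<Rightarrow> nat \<Rightarrow> real^'n) \<Rightarrow> real^'m \<Rightarrow> nat \<Rightarrow> nat \<Rightarrow> real^'n)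
    \<Rightarrow> ((nat \<Rightarrow> real^'n) \<Rightarrow> (nat \<Rightarrow> nat \<Rightarrow> real^'n) \<Rightarrow> real^'m \<Rightarrow> real^'m) \<Rightarrow> bool" where
  "F_C1 Nt s F Gu Gk Gm \<longleftrightarrow>
     (\<forall>x y z.
        (\<forall>e>0. \<exists>d>0. \<forall>hu hk hm. bnorm Nt s hu hk hm < d \<longrightarrow>
            \<bar>F (\<lambda>n. x n + hu n) (\<lambda>n i. y n i + hk n i) (z + hm) - F x y z
               - blin Nt s (Gu x y z) (Gk x y z) (Gm x y z) hu hk hm\<bar>
            \<le> e * bnorm Nt s hu hk hm) \<and>
        (\<forall>e>0. \<exists>d>0. \<forall>hu hk hm. bnorm Nt s hu hk hm < d \<longrightarrow>
            bnorm Nt s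
              (\<lambda>n. Gu (\<lambda>n. x n + hu n) (\<lambda>n i. y n i + hk n i) (z + hm) n - Gu x y z n)
              (\<lambda>n i. Gk (\<lambda>n. x n + hu n) (\<lambda>n i. y n i + hk n i) (z + hm) n i - Gk x y z n i)
              (Gm (\<lambda>n. x n + hu n) (\<lambda>n i. y n i + hk n i) (z + hm) - Gm x y z) < e))"

definition adjoint_sys :: "real^'n^'n \<Rightarrow> (real^'n \<Rightarrow> real^'m \<Rightarrow> real \<Rightarrow> real^'n^'n)
    \<Rightarrow> (nat \<Rightarrow> nat \<Rightarrow> real) \<Rightarrow> (nat \<Rightarrow> real) \<Rightarrow> (nat \<Rightarrow> real) \<Rightarrow> (nat \<Rightarrow> real)
    \<Rightarrow> real^'m \<Rightarrow> nat \<Rightarrow> nat \<Rightarrow> (nat \<Rightarrow> real^'n) \<Rightarrow> (nat \<Rightarrow> nat \<Rightarrow> real^'n)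
    \<Rightarrow> (nat \<Rightarrow> real^'n) \<Rightarrow> (nat \<Rightarrow> nat \<Rightarrow> real^'n)
    \<Rightarrow> (nat \<Rightarrow> real^'n) \<Rightarrow> (nat \<Rightarrow> nat \<Rightarrow> real^'n) \<Rightarrow> bool" where
  "adjoint_sys M Jr a b c dt mu Nt s u k gu gk lam kap \<longleftrightarrow>
     lam Nt = lam 0 + gu Nt \<and>
     (\<forall>n \<in> {1..Nt}.
        lam (n - 1) = lam n + gu (n - 1) +
          (\<Sum>i = 1..s. dt n *\<^sub>R
             (transpose (Jr (stage a u k n i) mu (tgrid dt (n - 1) + c i * dt n)) *v kap n i)) \<and>
        (\<forall>i \<in> {1..s}.
           transpose M *v kap n i = gk n i + b i *\<^sub>R lam n +
             (\<Sum>j = i..s. (a j i * dt n) *\<^sub>R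
                (transpose (Jr (stage a u k n j) mu (tgrid dt (n - 1) + c j * dt n)) *v kap n j))))"

end

theory Submission
  imports Defs
begin


lemma absorb_half: "(x::real) \<le> a + (b + x) / 2 \<Longrightarrow> x \<le> 2 * a + b" by (simp add: field_simps)

lemma half_cancel: "(y::real) \<noteq> 0 \<Longrightarrow> e / (2 * y) * y = e / 2" by (simp add: field_simps)

lemma core_implicit:
  fixes Phi :: "'a::real_normed_vector \<Rightarrow> 'b::real_normed_vector"
    and psi :: "'a \<Rightarrow> 'c::real_normed_vector" and eps :: "'a \<Rightarrow> 'd::real_normed_vector"
  assumes dpsi: "(psi has_derivative psi') (at x0)" and psi0: "psi x0 = 0" and phi0: "Phi x0 = 0"
    and P: "bounded_linear P" and Q: "bounded_linear Q"
    and eq: "\<forall>\<^sub>F v in at x0. Phi v = P (psi v) + Q (eps v)"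
    and epsb: "\<And>\<eta>. \<eta> > 0 \<Longrightarrow> \<forall>\<^sub>F v in at x0. norm (eps v) \<le> \<eta> * (norm (psi v) + norm (Phi v))"
  shows "(Phi has_derivative (\<lambda>h. P (psi' h))) (at x0)"
proof -
  have blpsi: "bounded_linear psi'" using dpsi has_derivative_bounded_linear by blast
  obtain KP where KP: "KP > 0" "\<And>x. norm (P x) \<le> norm x * KP" using bounded_linear.pos_bounded[OF P] by blast
  obtain KQ where KQ: "KQ > 0" "\<And>x. norm (Q x) \<le> norm x * KQ" using bounded_linear.pos_bounded[OF Q] by blast
  obtain Kp where Kp: "Kp > 0" "\<And>x. norm (psi' x) \<le> norm x * Kp" using bounded_linear.pos_bounded[OF blpsi] by blast
  have dpsi': "\<forall>\<^sub>F v in at x0. norm (psi v - psi' (v - x0)) \<le> e * norm (v - x0)" if "e > 0" for e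
  proof -
    obtain d where d: "d > 0" "\<And>y. norm (y - x0) < d \<Longrightarrow> norm (psi y - psi x0 - psi' (y - x0)) \<le> e * norm (y - x0)"
      using dpsi \<open>e>0\<close> unfolding has_derivative_at_alt by blast
    show ?thesis unfolding eventually_at using d psi0 by (auto simp: dist_norm)
  qed
  have psib: "\<forall>\<^sub>F v in at x0. norm (psi v) \<le> (Kp + 1) * norm (v - x0)"
    using dpsi'[OF zero_less_one]
  proof (rule eventually_mono)
    fix v assume "norm (psi v - psi' (v - x0)) \<le> 1 * norm (v - x0)"
    moreover have "norm (psi v) \<le> norm (psi v - psi' (v - x0)) + norm (psi' (v - x0))"
      using norm_triangle_ineq[of "psi v - psi' (v - x0)" "psi' (v - x0)"] by simp
    moreover note Kp(2)[of "v - x0"]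
    ultimately show "norm (psi v) \<le> (Kp + 1) * norm (v - x0)" by (simp add: algebra_simps)
  qed
  define C where "C = (2 * KP + 1) * (Kp + 1)"
  have C: "C > 0" unfolding C_def using KP Kp by simp
  have hh: "\<forall>\<^sub>F v in at x0. norm (eps v) \<le> 1 / (2 * KQ) * (norm (psi v) + norm (Phi v))"
    using epsb[of "1 / (2 * KQ)"] KQ(1) by simp
  have phib: "\<forall>\<^sub>F v in at x0. norm (Phi v) \<le> C * norm (v - x0)"
    using eq hh psib
  proof (eventually_elim)
    case (elim v)
    have "norm (Phi v) \<le> norm (P (psi v)) + norm (Q (eps v))" using elim(1) norm_triangle_ineq by simp
    also have "\<dots> \<le> norm (psi v) * KP + norm (eps v) * KQ" using KP KQ by (intro add_mono) auto
    finally have a1: "norm (Phi v) \<le> norm (psi v) * KP + norm (eps v) * KQ" .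
    have "norm (eps v) * KQ \<le> (1 / (2 * KQ) * (norm (psi v) + norm (Phi v))) * KQ"
      using elim(2) KQ by (intro mult_right_mono) auto
    also have "\<dots> = (norm (psi v) + norm (Phi v)) / 2" using KQ by (simp add: field_simps)
    finally have "norm (Phi v) \<le> norm (psi v) * KP + (norm (psi v) + norm (Phi v)) / 2" using a1 by linarith
    moreover have "(2 * KP + 1) * norm (psi v) = 2 * (norm (psi v) * KP) + norm (psi v)" by (simp add: algebra_simps)
    ultimately have "norm (Phi v) \<le> (2 * KP + 1) * norm (psi v)"
      using absorb_half[of "norm (Phi v)" "norm (psi v) * KP" "norm (psi v)"] by simp
    also have "\<dots> \<le> (2 * KP + 1) * ((Kp + 1) * norm (v - x0))"
      using elim(3) KP by (intro mult_left_mono) auto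
    finally show ?case by (simp add: C_def algebra_simps)
  qed
  have main: "\<forall>\<^sub>F v in at x0. norm (Phi v - P (psi' (v - x0))) \<le> e * norm (v - x0)" if e: "e > 0" for e
  proof -
    define e1 where "e1 = e / (2 * KP)"
    define et where "et = e / (2 * KQ * (Kp + 1 + C))"
    have e1: "e1 > 0" and et: "et > 0" using e KP KQ Kp C by (auto simp: e1_def et_def)
    show ?thesis using eq epsb[OF et] psib phib dpsi'[OF e1]
    proof (eventually_elim)
      case (elim v)
      have "et * (norm (psi v) + norm (Phi v)) \<le> et * ((Kp + 1) * norm (v - x0) + C * norm (v - x0))"
        using elim(3,4) et by (intro mult_left_mono) auto
      with elim(2) have epsv: "norm (eps v) \<le> et * ((Kp + 1) * norm (v - x0) + C * norm (v - x0))" by linarith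
      have lin: "P (psi v) - P (psi' (v - x0)) = P (psi v - psi' (v - x0))"
        by (simp add: linear_diff[OF bounded_linear.linear[OF P]])
      have "norm (Phi v - P (psi' (v - x0))) = norm (P (psi v - psi' (v - x0)) + Q (eps v))"
        using elim(1) lin by (simp add: algebra_simps)
      also have "\<dots> \<le> norm (P (psi v - psi' (v - x0))) + norm (Q (eps v))" by (rule norm_triangle_ineq)
      also have "\<dots> \<le> norm (psi v - psi' (v - x0)) * KP + norm (eps v) * KQ"
        using KP KQ by (intro add_mono) auto
      also have "\<dots> \<le> (e1 * norm (v - x0)) * KP + (et * ((Kp + 1) * norm (v - x0) + C * norm (v - x0))) * KQ"
        using elim(5) epsv KP KQ et by (intro add_mono mult_right_mono) auto
      also have "\<dots> = e * norm (v - x0)"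
      proof -
        have t1: "e1 * KP = e / 2" using KP by (simp add: e1_def)
        have "Kp + 1 + C \<noteq> 0" using Kp C by simp
        then have nz: "KQ * (Kp + 1 + C) \<noteq> 0" using KQ by simp
        have t2: "et * (KQ * (Kp + 1 + C)) = e / 2"
          using half_cancel[OF nz, of e] unfolding et_def by (simp add: mult.assoc)
        have "(e1 * norm (v - x0)) * KP + (et * ((Kp + 1) * norm (v - x0) + C * norm (v - x0))) * KQ
            = (e1 * KP) * norm (v - x0) + (et * (KQ * (Kp + 1 + C))) * norm (v - x0)"
          by (simp add: algebra_simps)
        also have "\<dots> = e * norm (v - x0)" unfolding t1 t2 by (simp add: field_simps)
        finally show ?thesis .
      qed
      finally show ?case .
    qed
  qed
  show ?thesis unfolding has_derivative_at_alt
  proof (intro conjI allI impI)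
    show "bounded_linear (\<lambda>h. P (psi' h))"
      using bounded_linear_compose[OF P blpsi] by simp
    fix e :: real assume "e > 0"
    from main[OF this] obtain d where d: "d > 0" "\<And>v. v \<noteq> x0 \<Longrightarrow> dist v x0 < d \<Longrightarrow>
        norm (Phi v - P (psi' (v - x0))) \<le> e * norm (v - x0)"
      unfolding eventually_at by blast
    show "\<exists>d>0. \<forall>y. norm (y - x0) < d \<longrightarrow> norm (Phi y - Phi x0 - P (psi' (y - x0))) \<le> e * norm (y - x0)"
    proof (intro exI[of _ d] conjI allI impI)
      fix y assume "norm (y - x0) < d"
      then show "norm (Phi y - Phi x0 - P (psi' (y - x0))) \<le> e * norm (y - x0)"
        using d phi0 by (cases "y = x0") (auto simp: dist_norm linear_simps blpsi linear_0[OF bounded_linear.linear[OF P]] linear_0[OF bounded_linear.linear[OF blpsi]])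
    qed (rule d(1))
  qed
qed

lemma smat_vec: "(c *\<^sub>R (A::real^'n^'m)) *v x = c *\<^sub>R (A *v x)"
  by (simp add: scaleR_matrix_vector_assoc)

lemma stage_implicit:
  fixes f g :: "'a::real_normed_vector \<Rightarrow> real^'n" and R :: "real^'n \<Rightarrow> real^'n"
    and A M :: "real^'n^'n"
  assumes fc: "continuous (at x0) f" and dg: "(g has_derivative g') (at x0)"
    and dR: "(R has_derivative (\<lambda>h. A *v h)) (at (g x0 + \<beta> *\<^sub>R f x0))"
    and eq: "\<forall>\<^sub>F v in at x0. M *v f v = \<alpha> *\<^sub>R R (g v + \<beta> *\<^sub>R f v)"
    and eq0: "M *v f x0 = \<alpha> *\<^sub>R R (g x0 + \<beta> *\<^sub>R f x0)"
    and inv: "invertible (M - (\<beta> * \<alpha>) *\<^sub>R A)"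
  shows "\<exists>L. (f has_derivative L) (at x0) \<and> (\<forall>h. M *v L h = \<alpha> *\<^sub>R (A *v (g' h + \<beta> *\<^sub>R L h)))"
proof -
  define B where "B = M - (\<beta> * \<alpha>) *\<^sub>R A"
  obtain Bi where Bi: "B ** Bi = mat 1" "Bi ** B = mat 1"
    using inv unfolding B_def invertible_def by blast
  define p0 where "p0 = g x0 + \<beta> *\<^sub>R f x0"
  define Phi where "Phi v = f v - f x0" for v
  define psi where "psi v = g v - g x0" for v
  define eps where "eps v = R (g v + \<beta> *\<^sub>R f v) - R p0 - A *v (psi v + \<beta> *\<^sub>R Phi v)" for v
  define P where "P h = Bi *v (\<alpha> *\<^sub>R (A *v h))" for h
  define Q where "Q e = Bi *v (\<alpha> *\<^sub>R e)" for e
  have "P = (*v) (Bi ** (\<alpha> *\<^sub>R A))"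
    by (rule ext) (simp add: P_def matrix_vector_mul_assoc[symmetric] smat_vec matrix_vector_mult_scaleR)
  then have blP: "bounded_linear P" by simp
  have "Q = (*v) (\<alpha> *\<^sub>R Bi)"
    by (rule ext) (simp add: Q_def smat_vec matrix_vector_mult_scaleR)
  then have blQ: "bounded_linear Q" by simp
  have dpsi: "(psi has_derivative g') (at x0)" unfolding psi_def
    using has_derivative_diff[OF dg has_derivative_const[of "g x0"]] by simp
  have eqP: "\<forall>\<^sub>F v in at x0. Phi v = P (psi v) + Q (eps v)"
    using eq
  proof (rule eventually_mono)
    fix v assume ev: "M *v f v = \<alpha> *\<^sub>R R (g v + \<beta> *\<^sub>R f v)"
    have "B *v Phi v = \<alpha> *\<^sub>R (A *v psi v) + \<alpha> *\<^sub>R eps v"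
      unfolding B_def Phi_def eps_def
      using ev eq0 unfolding p0_def[symmetric]
      by (simp add: algebra_simps smat_vec)
    then have "Bi *v (B *v Phi v) = P (psi v) + Q (eps v)"
      unfolding P_def Q_def by (simp add: algebra_simps)
    then show "Phi v = P (psi v) + Q (eps v)"
      by (simp add: matrix_vector_mul_assoc Bi)
  qed
  have yc: "continuous (at x0) (\<lambda>v. g v + \<beta> *\<^sub>R f v)"
    using has_derivative_continuous[OF dg] fc by (intro continuous_intros)
  have epsb: "\<forall>\<^sub>F v in at x0. norm (eps v) \<le> \<eta> * (norm (psi v) + norm (Phi v))" if "\<eta> > 0" for \<eta>
  proof -
    define et where "et = \<eta> / (1 + \<bar>\<beta>\<bar>)"
    have et: "et > 0" using that by (simp add: et_def add_pos_nonneg)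
    obtain d where d: "d > 0" "\<And>y. norm (y - p0) < d \<Longrightarrow> norm (R y - R p0 - A *v (y - p0)) \<le> et * norm (y - p0)"
      using dR et unfolding has_derivative_at_alt p0_def by blast
    have "\<forall>\<^sub>F v in at x0. dist (g v + \<beta> *\<^sub>R f v) p0 < d"
      using yc d(1) unfolding continuous_at p0_def tendsto_iff by blast
    then show ?thesis
    proof (rule eventually_mono)
      fix v assume "dist (g v + \<beta> *\<^sub>R f v) p0 < d"
      then have "norm (eps v) \<le> et * norm (g v + \<beta> *\<^sub>R f v - p0)"
        using d(2)[of "g v + \<beta> *\<^sub>R f v"] unfolding eps_def dist_norm
        by (simp add: psi_def Phi_def p0_def algebra_simps)
      also have "g v + \<beta> *\<^sub>R f v - p0 = psi v + \<beta> *\<^sub>R Phi v"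
        by (simp add: psi_def Phi_def p0_def algebra_simps)
      also have "norm (psi v + \<beta> *\<^sub>R Phi v) \<le> (1 + \<bar>\<beta>\<bar>) * (norm (psi v) + norm (Phi v))"
      proof -
        have "norm (psi v + \<beta> *\<^sub>R Phi v) \<le> norm (psi v) + \<bar>\<beta>\<bar> * norm (Phi v)"
          using norm_triangle_ineq[of "psi v" "\<beta> *\<^sub>R Phi v"] by simp
        also have "\<dots> \<le> (1 + \<bar>\<beta>\<bar>) * (norm (psi v) + norm (Phi v))"
          by (simp add: algebra_simps)
        finally show ?thesis .
      qed
      then have "et * norm (psi v + \<beta> *\<^sub>R Phi v) \<le> et * ((1 + \<bar>\<beta>\<bar>) * (norm (psi v) + norm (Phi v)))"
        using et by (intro mult_left_mono) auto
      also have "\<dots> = \<eta> * (norm (psi v) + norm (Phi v))"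
        unfolding et_def by (simp add: field_simps add_pos_nonneg)
      finally show "norm (eps v) \<le> \<eta> * (norm (psi v) + norm (Phi v))" by simp
    qed
  qed
  have "(Phi has_derivative (\<lambda>h. P (g' h))) (at x0)"
    by (rule core_implicit[OF dpsi _ _ blP blQ eqP epsb]) (auto simp: psi_def Phi_def)
  then have df: "(f has_derivative (\<lambda>h. P (g' h))) (at x0)"
    using has_derivative_add_const[of Phi "\<lambda>h. P (g' h)" "at x0" "f x0"] by (simp add: Phi_def)
  have "M *v P (g' h) = \<alpha> *\<^sub>R (A *v (g' h + \<beta> *\<^sub>R P (g' h)))" for h
  proof -
    have "B *v P (g' h) = \<alpha> *\<^sub>R (A *v g' h)"
      unfolding P_def by (simp add: matrix_vector_mul_assoc Bi)
    then show ?thesis unfolding B_def by (simp add: algebra_simps smat_vec)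
  qed
  with df show ?thesis by blast
qed



lemma transpose_diff_scale: "transpose (M - c *\<^sub>R (A::real^'n^'n)) = transpose M - c *\<^sub>R transpose A"
  by (simp add: transpose_def vec_eq_iff)

lemma smat_vec2: "(c *\<^sub>R (A::real^'n^'m)) *v x = c *\<^sub>R (A *v x)"
  by (simp add: scaleR_matrix_vector_assoc)

lemma inv_T:
  assumes "invertible (M - c *\<^sub>R (A::real^'n^'n))"
  obtains Bi where "(transpose M - c *\<^sub>R transpose A) ** Bi = mat 1" "Bi ** (transpose M - c *\<^sub>R transpose A) = mat 1"
  using transpose_invertible[OF assms] unfolding transpose_diff_scale invertible_def by blast

definition tri_eq :: "real^'n^'n \<Rightarrow> (nat \<Rightarrow> real^'n^'n) \<Rightarrow> (nat \<Rightarrow> nat \<Rightarrow> real) \<Rightarrow> nat \<Rightarrow> (nat \<Rightarrow> real^'n)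
   \<Rightarrow> (nat \<Rightarrow> real^'n) \<Rightarrow> nat \<Rightarrow> bool" where
  "tri_eq M A cc s rhs K i \<longleftrightarrow> transpose M *v K i = rhs i + (\<Sum>j = i..s. cc j i *\<^sub>R (transpose (A j) *v K j))"

lemma tri_split:
  assumes "i \<le> s"
  shows "tri_eq M A cc s rhs K i \<longleftrightarrow>
    (transpose M - cc i i *\<^sub>R transpose (A i)) *v K i = rhs i + (\<Sum>j = Suc i..s. cc j i *\<^sub>R (transpose (A j) *v K j))"
  unfolding tri_eq_def using assms
  by (simp add: sum.atLeast_Suc_atMost algebra_simps smat_vec2)

lemma tri_exists:
  assumes inv: "\<And>i. i \<in> {1..s} \<Longrightarrow> invertible (M - cc i i *\<^sub>R A i)"
  shows "\<exists>K. \<forall>i\<in>{1..s}. tri_eq M A cc s rhs K i"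
proof -
  have "\<exists>K. \<forall>i\<in>{1..s}. s - m < i \<longrightarrow> tri_eq M A cc s rhs K i" if "m \<le> s" for m
    using that
  proof (induction m)
    case 0 show ?case by auto
  next
    case (Suc m)
    then obtain K where K: "\<forall>i\<in>{1..s}. s - m < i \<longrightarrow> tri_eq M A cc s rhs K i" by auto
    define i0 where "i0 = s - m"
    have i0: "i0 \<in> {1..s}" using Suc.prems by (auto simp: i0_def)
    obtain Bi where Bi: "(transpose M - cc i0 i0 *\<^sub>R transpose (A i0)) ** Bi = mat 1"
      using inv_T[OF inv[OF i0]] by blast
    define z where "z = Bi *v (rhs i0 + (\<Sum>j = Suc i0..s. cc j i0 *\<^sub>R (transpose (A j) *v K j)))"
    have sums: "(\<Sum>j = Suc i0..s. cc j i0 *\<^sub>R (transpose (A j) *v (K(i0 := z)) j)) =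
        (\<Sum>j = Suc i0..s. cc j i0 *\<^sub>R (transpose (A j) *v K j))"
      by (intro sum.cong) auto
    have i0s: "i0 \<le> s" using i0 by simp
    have e0: "tri_eq M A cc s rhs (K(i0 := z)) i0"
      unfolding tri_split[OF i0s] sums
      by (simp add: z_def matrix_vector_mul_assoc Bi del: transpose_matrix_vector)
    show ?case
    proof (intro exI[of _ "K(i0 := z)"] ballI impI)
      fix i assume i: "i \<in> {1..s}" "s - Suc m < i"
      show "tri_eq M A cc s rhs (K(i0 := z)) i"
      proof (cases "i = i0")
        case True then show ?thesis using e0 by simp
      next
        case False
        then have "s - m < i" using i by (auto simp: i0_def)
        then have "tri_eq M A cc s rhs K i" using K i by auto
        moreover have "(\<Sum>j = i..s. cc j i *\<^sub>R (transpose (A j) *v (K(i0 := z)) j)) =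
            (\<Sum>j = i..s. cc j i *\<^sub>R (transpose (A j) *v K j))"
          using \<open>s - m < i\<close> by (intro sum.cong) (auto simp: i0_def)
        ultimately show ?thesis using False unfolding tri_eq_def by simp
      qed
    qed
  qed
  from this[of s] show ?thesis by auto
qed

lemma tri_unique:
  assumes inv: "\<And>i. i \<in> {1..s} \<Longrightarrow> invertible (M - cc i i *\<^sub>R A i)"
    and K: "\<forall>i\<in>{1..s}. tri_eq M A cc s rhs K i" and K': "\<forall>i\<in>{1..s}. tri_eq M A cc s rhs K' i"
  shows "\<forall>i\<in>{1..s}. K i = K' i"
proof -
  have "\<forall>i\<in>{1..s}. s - m < i \<longrightarrow> K i = K' i" if "m \<le> s" for m
    using that
  proof (induction m)
    case 0 show ?case by auto
  next
    case (Suc m)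
    then have IH: "\<forall>i\<in>{1..s}. s - m < i \<longrightarrow> K i = K' i" by auto
    define i0 where "i0 = s - m"
    have i0: "i0 \<in> {1..s}" using Suc.prems by (auto simp: i0_def)
    obtain Bi where Bi: "Bi ** (transpose M - cc i0 i0 *\<^sub>R transpose (A i0)) = mat 1"
      using inv_T[OF inv[OF i0]] by blast
    have sums: "(\<Sum>j = Suc i0..s. cc j i0 *\<^sub>R (transpose (A j) *v K j)) =
        (\<Sum>j = Suc i0..s. cc j i0 *\<^sub>R (transpose (A j) *v K' j))"
      using IH by (intro sum.cong) (auto simp: i0_def)
    have "(transpose M - cc i0 i0 *\<^sub>R transpose (A i0)) *v K i0 = (transpose M - cc i0 i0 *\<^sub>R transpose (A i0)) *v K' i0"
      using K[rule_format, OF i0] K'[rule_format, OF i0] i0 unfolding tri_split[of i0 s] sums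
      by (simp add: tri_split[of i0 s] sums del: transpose_matrix_vector)
    then have "Bi *v ((transpose M - cc i0 i0 *\<^sub>R transpose (A i0)) *v K i0) =
        Bi *v ((transpose M - cc i0 i0 *\<^sub>R transpose (A i0)) *v K' i0)" by simp
    then have "K i0 = K' i0" by (simp add: matrix_vector_mul_assoc Bi)
    show ?case
    proof (intro ballI impI)
      fix i assume i: "i \<in> {1..s}" "s - Suc m < i"
      show "K i = K' i"
      proof (cases "i = i0")
        case True then show ?thesis using \<open>K i0 = K' i0\<close> by simp
      next
        case False then have "s - m < i" using i Suc.prems by (auto simp: i0_def)
        then show ?thesis using IH i by auto
      qed
    qed
  qed
  from this[of s] show ?thesis by auto
qed

lemma tdot: "(transpose (M::real^'n^'n) *v x) \<bullet> y = x \<bullet> (M *v y)"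
  by (simp add: dot_lmul_matrix)

lemma tri_swap: fixes s :: nat shows "(\<Sum>i = 1..s. \<Sum>j = i..s. G i j) = (\<Sum>j = 1..s. \<Sum>i = 1..j. (G i j :: real))"
proof (induction s)
  case 0 then show ?case by simp
next
  case (Suc s)
  have "(\<Sum>i = 1..Suc s. \<Sum>j = i..Suc s. G i j) = (\<Sum>i = 1..s. \<Sum>j = i..Suc s. G i j) + G (Suc s) (Suc s)"
    by simp
  also have "(\<Sum>i = 1..s. \<Sum>j = i..Suc s. G i j) = (\<Sum>i = 1..s. (\<Sum>j = i..s. G i j) + G i (Suc s))"
    by (intro sum.cong) auto
  also have "\<dots> = (\<Sum>j = 1..s. \<Sum>i = 1..j. G i j) + (\<Sum>i = 1..s. G i (Suc s))"
    by (simp only: sum.distrib Suc.IH)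
  finally show ?case by simp
qed

lemma step_dual:
  fixes M :: "real^'n^'n" and A :: "nat \<Rightarrow> real^'n^'n"
  assumes fw: "\<forall>i\<in>{1..s}. M *v dk i = h *\<^sub>R (A i *v (\<delta> + (\<Sum>j = 1..i. a i j *\<^sub>R dk j)))"
    and adj: "\<forall>i\<in>{1..s}. transpose M *v kap i = gk i + b i *\<^sub>R lam + (\<Sum>j = i..s. (a j i * h) *\<^sub>R (transpose (A j) *v kap j))"
  shows "(\<Sum>i = 1..s. h *\<^sub>R (transpose (A i) *v kap i)) \<bullet> \<delta> = (\<Sum>i = 1..s. gk i \<bullet> dk i) + lam \<bullet> (\<Sum>i = 1..s. b i *\<^sub>R dk i)"
proof -
  define F where "F x y = (a x y * h) * ((transpose (A x) *v kap x) \<bullet> dk y)" for x y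
  have Sa: "(\<Sum>i = 1..s. kap i \<bullet> (M *v dk i)) = (\<Sum>i = 1..s. gk i \<bullet> dk i + b i * (lam \<bullet> dk i) + (\<Sum>j = i..s. F j i))"
  proof (intro sum.cong refl)
    fix i assume i: "i \<in> {1..s}"
    have "kap i \<bullet> (M *v dk i) = (transpose M *v kap i) \<bullet> dk i" by (simp only: tdot)
    also have "\<dots> = (gk i + b i *\<^sub>R lam + (\<Sum>j = i..s. (a j i * h) *\<^sub>R (transpose (A j) *v kap j))) \<bullet> dk i"
      using adj i by simp
    also have "\<dots> = gk i \<bullet> dk i + b i * (lam \<bullet> dk i) + (\<Sum>j = i..s. F j i)"
      by (simp add: inner_add_left inner_sum_left F_def del: transpose_matrix_vector)
    finally show "kap i \<bullet> (M *v dk i) = gk i \<bullet> dk i + b i * (lam \<bullet> dk i) + (\<Sum>j = i..s. F j i)" .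
  qed
  have Sb: "(\<Sum>i = 1..s. kap i \<bullet> (M *v dk i)) = (\<Sum>i = 1..s. h * ((transpose (A i) *v kap i) \<bullet> \<delta>) + (\<Sum>j = 1..i. F i j))"
  proof (intro sum.cong refl)
    fix i assume i: "i \<in> {1..s}"
    have "kap i \<bullet> (M *v dk i) = kap i \<bullet> (h *\<^sub>R (A i *v (\<delta> + (\<Sum>j = 1..i. a i j *\<^sub>R dk j))))"
      using fw i by simp
    also have "\<dots> = h * ((transpose (A i) *v kap i) \<bullet> (\<delta> + (\<Sum>j = 1..i. a i j *\<^sub>R dk j)))"
      by (simp only: inner_scaleR_right tdot)
    also have "\<dots> = h * ((transpose (A i) *v kap i) \<bullet> \<delta>) + (\<Sum>j = 1..i. F i j)"
      by (simp add: inner_add_right inner_sum_right F_def sum_distrib_left algebra_simps del: transpose_matrix_vector)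
    finally show "kap i \<bullet> (M *v dk i) = h * ((transpose (A i) *v kap i) \<bullet> \<delta>) + (\<Sum>j = 1..i. F i j)" .
  qed
  have sw: "(\<Sum>i = 1..s. \<Sum>j = i..s. F j i) = (\<Sum>i = 1..s. \<Sum>j = 1..i. F i j)"
    using tri_swap[where s=s and G="\<lambda>i j. F j i"] by simp
  have "(\<Sum>i = 1..s. h *\<^sub>R (transpose (A i) *v kap i)) \<bullet> \<delta> = (\<Sum>i = 1..s. h * ((transpose (A i) *v kap i) \<bullet> \<delta>))"
    by (simp add: inner_sum_left del: transpose_matrix_vector)
  moreover have "lam \<bullet> (\<Sum>i = 1..s. b i *\<^sub>R dk i) = (\<Sum>i = 1..s. b i * (lam \<bullet> dk i))"
    by (simp add: inner_sum_right)
  ultimately show ?thesis using Sa Sb sw by (simp add: sum.distrib)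
qed



lemma flow_at_u0:
  assumes sol: "dirk_eqs M r a b c dt mu Nt s u k" and V_mem: "u 0 \<in> V"
   and flow_init: "\<And>v. v \<in> V \<Longrightarrow> Us v 0 = v"
   and flow_eqs: "\<And>v. v \<in> V \<Longrightarrow> dirk_eqs M r a b c dt mu Nt s (Us v) (Ks v)"
   and flow_branch: "\<And>n i. n \<in> {1..Nt} \<Longrightarrow> i \<in> {1..s} \<Longrightarrow> Ks (u 0) n i = k n i"
  shows "n \<le> Nt \<Longrightarrow> Us (u 0) n = u n"
proof (induction n)
  case 0 then show ?case using flow_init V_mem by simp
next
  case (Suc n)
  have "Us (u 0) (Suc n) = Us (u 0) n + (\<Sum>i=1..s. b i *\<^sub>R Ks (u 0) (Suc n) i)"
    using flow_eqs[OF V_mem] Suc.prems unfolding dirk_eqs_def by auto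
  also have "\<dots> = u n + (\<Sum>i=1..s. b i *\<^sub>R k (Suc n) i)"
    using Suc flow_branch by (auto intro!: sum.cong)
  also have "\<dots> = u (Suc n)" using sol Suc.prems unfolding dirk_eqs_def by auto
  finally show ?case .
qed

lemma sum_split_last: "(\<Sum>j = 1..Suc i. f j) = (\<Sum>j = 1..i. f j) + (f (Suc i) :: 'a::comm_monoid_add)"
  by simp

lemma tangent:
  fixes M :: "real^'n^'n"
    and r :: "real^'n \<Rightarrow> real^'m \<Rightarrow> real \<Rightarrow> real^'n"
    and Jr :: "real^'n \<Rightarrow> real^'m \<Rightarrow> real \<Rightarrow> real^'n^'n"
    and a :: "nat \<Rightarrow> nat \<Rightarrow> real" and b c dt :: "nat \<Rightarrow> real"
    and Nt s :: nat and mu :: "real^'m"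
    and u :: "nat \<Rightarrow> real^'n" and k :: "nat \<Rightarrow> nat \<Rightarrow> real^'n"
    and V :: "(real^'n) set"
    and Us :: "real^'n \<Rightarrow> nat \<Rightarrow> real^'n"
    and Ks :: "real^'n \<Rightarrow> nat \<Rightarrow> nat \<Rightarrow> real^'n"
    and J :: "real^'n^'n"
  assumes Jr: "\<And>v m t. ((\<lambda>w. r w m t) has_derivative (\<lambda>h. Jr v m t *v h)) (at v)"
    and sol: "dirk_eqs M r a b c dt mu Nt s u k"
    and stage_nonsing: "\<And>n i. n \<in> {1..Nt} \<Longrightarrow> i \<in> {1..s} \<Longrightarrow>
          invertible (M - (a i i * dt n) *\<^sub>R Jr (stage a u k n i) mu (tgrid dt (n - 1) + c i * dt n))"
    and V_open: "open V" and V_mem: "u 0 \<in> V"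
    and flow_init: "\<And>v. v \<in> V \<Longrightarrow> Us v 0 = v"
    and flow_eqs: "\<And>v. v \<in> V \<Longrightarrow> dirk_eqs M r a b c dt mu Nt s (Us v) (Ks v)"
    and flow_branch: "\<And>n i. n \<in> {1..Nt} \<Longrightarrow> i \<in> {1..s} \<Longrightarrow>
          Ks (u 0) n i = k n i \<and> continuous (at (u 0)) (\<lambda>v. Ks v n i)"
    and flow_deriv: "((\<lambda>v. Us v Nt) has_derivative (\<lambda>h. J *v h)) (at (u 0))"
  shows "\<exists>du dk. du 0 = \<delta> \<and> du Nt = J *v \<delta> \<and>
    (\<forall>n\<in>{1..Nt}. du n = du (n - 1) + (\<Sum>i = 1..s. b i *\<^sub>R dk n i) \<and>
      (\<forall>i\<in>{1..s}. M *v dk n i = dt n *\<^sub>R (Jr (stage a u k n i) mu (tgrid dt (n - 1) + c i * dt n)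
          *v (du (n - 1) + (\<Sum>j = 1..i. a i j *\<^sub>R dk n j)))))"
proof -
  have U0: "\<And>n. n \<le> Nt \<Longrightarrow> Us (u 0) n = u n"
    by (rule flow_at_u0[OF sol V_mem flow_init flow_eqs]) (use flow_branch in auto)
  have evV: "\<forall>\<^sub>F v in at (u 0). v \<in> V" using eventually_at_in_open'[OF V_open V_mem] .
  have H: "\<exists>DU DK. (\<forall>m\<le>n. ((\<lambda>v. Us v m) has_derivative DU m) (at (u 0))) \<and> DU 0 = (\<lambda>h. h) \<and>
      (\<forall>m\<in>{1..n}. \<forall>i\<in>{1..s}. ((\<lambda>v. Ks v m i) has_derivative DK m i) (at (u 0))) \<and>
      (\<forall>m\<in>{1..n}. \<forall>h. DU m h = DU (m - 1) h + (\<Sum>i = 1..s. b i *\<^sub>R DK m i h) \<and>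
        (\<forall>i\<in>{1..s}. M *v DK m i h = dt m *\<^sub>R (Jr (stage a u k m i) mu (tgrid dt (m - 1) + c i * dt m)
          *v (DU (m - 1) h + (\<Sum>j = 1..i. a i j *\<^sub>R DK m j h)))))"
    if "n \<le> Nt" for n
    using that
  proof (induction n)
    case 0
    have "((\<lambda>v. Us v 0) has_derivative (\<lambda>h. h)) (at (u 0))"
      by (rule has_derivative_transform_within_open[OF has_derivative_ident V_open V_mem]) (simp add: flow_init)
    then show ?case by (intro exI[of _ "\<lambda>_. \<lambda>h. h"] exI[of _ "\<lambda>_ _. \<lambda>h. 0"]) auto
  next
    case (Suc n)
    then obtain DU DK where
      IH1: "\<forall>m\<le>n. ((\<lambda>v. Us v m) has_derivative DU m) (at (u 0))" and IH2: "DU 0 = (\<lambda>h. h)" and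
      IH3: "\<forall>m\<in>{1..n}. \<forall>i\<in>{1..s}. ((\<lambda>v. Ks v m i) has_derivative DK m i) (at (u 0))" and
      IH4: "\<forall>m\<in>{1..n}. \<forall>h. DU m h = DU (m - 1) h + (\<Sum>i = 1..s. b i *\<^sub>R DK m i h) \<and>
        (\<forall>i\<in>{1..s}. M *v DK m i h = dt m *\<^sub>R (Jr (stage a u k m i) mu (tgrid dt (m - 1) + c i * dt m)
          *v (DU (m - 1) h + (\<Sum>j = 1..i. a i j *\<^sub>R DK m j h))))"
      by auto
    have nN: "Suc n \<in> {1..Nt}" using Suc.prems by simp
    define tt where "tt i = tgrid dt n + c i * dt (Suc n)" for i
    have stv: "stage a (Us v) (Ks v) (Suc n) (Suc i) =
        (Us v n + (\<Sum>l = 1..i. a (Suc i) l *\<^sub>R Ks v (Suc n) l)) + a (Suc i) (Suc i) *\<^sub>R Ks v (Suc n) (Suc i)" for v i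
      unfolding stage_def by (simp add: add.assoc)
    have inner: "\<exists>E. (\<forall>j\<in>{1..i}. ((\<lambda>v. Ks v (Suc n) j) has_derivative E j) (at (u 0))) \<and>
       (\<forall>j\<in>{1..i}. \<forall>h. M *v E j h = dt (Suc n) *\<^sub>R (Jr (stage a u k (Suc n) j) mu (tt j)
          *v (DU n h + (\<Sum>l = 1..j. a j l *\<^sub>R E l h))))" if "i \<le> s" for i
      using that
    proof (induction i)
      case 0 show ?case by simp
    next
      case (Suc i)
      then obtain E where E1: "\<forall>j\<in>{1..i}. ((\<lambda>v. Ks v (Suc n) j) has_derivative E j) (at (u 0))"
        and E2: "\<forall>j\<in>{1..i}. \<forall>h. M *v E j h = dt (Suc n) *\<^sub>R (Jr (stage a u k (Suc n) j) mu (tt j)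
          *v (DU n h + (\<Sum>l = 1..j. a j l *\<^sub>R E l h)))" by auto
      have iS: "Suc i \<in> {1..s}" using Suc.prems by simp
      define g where "g v = Us v n + (\<Sum>l = 1..i. a (Suc i) l *\<^sub>R Ks v (Suc n) l)" for v
      define g' where "g' h = DU n h + (\<Sum>l = 1..i. a (Suc i) l *\<^sub>R E l h)" for h
      define \<beta> where "\<beta> = a (Suc i) (Suc i)"
      define A where "A = Jr (stage a u k (Suc n) (Suc i)) mu (tt (Suc i))"
      have dg: "(g has_derivative g') (at (u 0))" unfolding g_def g'_def
        using IH1 E1 by (intro has_derivative_add has_derivative_sum has_derivative_scaleR_right) auto
      have pt: "g (u 0) + \<beta> *\<^sub>R Ks (u 0) (Suc n) (Suc i) = stage a u k (Suc n) (Suc i)"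
      proof -
        have "(\<Sum>l = 1..i. a (Suc i) l *\<^sub>R Ks (u 0) (Suc n) l) = (\<Sum>l = 1..i. a (Suc i) l *\<^sub>R k (Suc n) l)"
          using flow_branch nN Suc.prems by (intro sum.cong) auto
        then show ?thesis unfolding g_def \<beta>_def stage_def
          using U0[of n] Suc.prems(1) flow_branch[OF nN iS] \<open>Suc n \<le> Nt\<close>
          by (simp add: add.assoc)
      qed
      have fc: "continuous (at (u 0)) (\<lambda>v. Ks v (Suc n) (Suc i))" using flow_branch[OF nN iS] by simp
      have eqV: "M *v Ks v (Suc n) (Suc i) = dt (Suc n) *\<^sub>R r (g v + \<beta> *\<^sub>R Ks v (Suc n) (Suc i)) mu (tt (Suc i))"
        if "v \<in> V" for v
      proof -
        have "M *v Ks v (Suc n) (Suc i) = dt (Suc n) *\<^sub>R r (stage a (Us v) (Ks v) (Suc n) (Suc i)) mu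
            (tgrid dt (Suc n - 1) + c (Suc i) * dt (Suc n))"
          using flow_eqs[OF that] nN iS unfolding dirk_eqs_def by blast
        then show ?thesis unfolding stv g_def \<beta>_def tt_def by simp
      qed
      have eq: "\<forall>\<^sub>F v in at (u 0). M *v Ks v (Suc n) (Suc i) = dt (Suc n) *\<^sub>R r (g v + \<beta> *\<^sub>R Ks v (Suc n) (Suc i)) mu (tt (Suc i))"
        using evV by (rule eventually_mono) (rule eqV)
      have dR: "((\<lambda>w. r w mu (tt (Suc i))) has_derivative (\<lambda>h. A *v h)) (at (g (u 0) + \<beta> *\<^sub>R Ks (u 0) (Suc n) (Suc i)))"
        unfolding pt A_def by (rule Jr)
      have inv: "invertible (M - (\<beta> * dt (Suc n)) *\<^sub>R A)"
        using stage_nonsing[OF nN iS] unfolding A_def \<beta>_def tt_def by simp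
      obtain L where L1: "((\<lambda>v. Ks v (Suc n) (Suc i)) has_derivative L) (at (u 0))"
        and L2: "\<And>h. M *v L h = dt (Suc n) *\<^sub>R (A *v (g' h + \<beta> *\<^sub>R L h))"
        using stage_implicit[OF fc dg dR eq eqV[OF V_mem] inv] by blast
      show ?case
      proof (intro exI[of _ "E(Suc i := L)"] conjI ballI allI)
        fix j assume j: "j \<in> {1..Suc i}"
        show "((\<lambda>v. Ks v (Suc n) j) has_derivative (E(Suc i := L)) j) (at (u 0))"
          using j E1 L1 by (cases "j = Suc i") auto
      next
        fix j h assume j: "j \<in> {1..Suc i}"
        show "M *v (E(Suc i := L)) j h = dt (Suc n) *\<^sub>R (Jr (stage a u k (Suc n) j) mu (tt j)
          *v (DU n h + (\<Sum>l = 1..j. a j l *\<^sub>R (E(Suc i := L)) l h)))"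
        proof (cases "j = Suc i")
          case True
          have "(\<Sum>l = 1..Suc i. a (Suc i) l *\<^sub>R (E(Suc i := L)) l h) = (\<Sum>l = 1..i. a (Suc i) l *\<^sub>R E l h) + \<beta> *\<^sub>R L h"
            unfolding sum_split_last \<beta>_def by (auto intro!: sum.cong)
          then show ?thesis using True L2[of h] unfolding A_def g'_def \<beta>_def by (simp add: add.assoc)
        next
          case False
          then have j': "j \<in> {1..i}" using j by auto
          have "(\<Sum>l = 1..j. a j l *\<^sub>R (E(Suc i := L)) l h) = (\<Sum>l = 1..j. a j l *\<^sub>R E l h)"
            using j' by (auto intro!: sum.cong)
          then show ?thesis using False E2 j' by simp
        qed
      qed
    qed
    obtain E where E1: "\<forall>j\<in>{1..s}. ((\<lambda>v. Ks v (Suc n) j) has_derivative E j) (at (u 0))"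
        and E2: "\<forall>j\<in>{1..s}. \<forall>h. M *v E j h = dt (Suc n) *\<^sub>R (Jr (stage a u k (Suc n) j) mu (tt j)
          *v (DU n h + (\<Sum>l = 1..j. a j l *\<^sub>R E l h)))"
      using inner[of s] by auto
    define DU' where "DU' = DU(Suc n := (\<lambda>h. DU n h + (\<Sum>i = 1..s. b i *\<^sub>R E i h)))"
    define DK' where "DK' = DK(Suc n := E)"
    have dUS: "((\<lambda>v. Us v (Suc n)) has_derivative DU' (Suc n)) (at (u 0))"
    proof -
      have "((\<lambda>v. Us v n + (\<Sum>i = 1..s. b i *\<^sub>R Ks v (Suc n) i)) has_derivative DU' (Suc n)) (at (u 0))"
        unfolding DU'_def using IH1 E1
        by (simp, intro has_derivative_add has_derivative_sum has_derivative_scaleR_right) auto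
      then show ?thesis
        by (rule has_derivative_transform_within_open[OF _ V_open V_mem])
          (use flow_eqs nN in \<open>auto simp: dirk_eqs_def\<close>)
    qed
    show ?case
    proof (intro exI[of _ DU'] exI[of _ DK'] conjI ballI allI impI)
      fix m assume "m \<le> Suc n"
      then show "((\<lambda>v. Us v m) has_derivative DU' m) (at (u 0))"
        using IH1 dUS by (cases "m = Suc n") (auto simp: DU'_def)
    next
      show "DU' 0 = (\<lambda>h. h)" using IH2 by (simp add: DU'_def)
    next
      fix m i assume "m \<in> {1..Suc n}" "i \<in> {1..s}"
      then show "((\<lambda>v. Ks v m i) has_derivative DK' m i) (at (u 0))"
        using IH3 E1 by (cases "m = Suc n") (auto simp: DK'_def)
    next
      fix m h assume m: "m \<in> {1..Suc n}"
      show "DU' m h = DU' (m - 1) h + (\<Sum>i = 1..s. b i *\<^sub>R DK' m i h)"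
        using m IH4 by (cases "m = Suc n") (auto simp: DU'_def DK'_def)
    next
      fix m h i assume m: "m \<in> {1..Suc n}" and i: "i \<in> {1..s}"
      show "M *v DK' m i h = dt m *\<^sub>R (Jr (stage a u k m i) mu (tgrid dt (m - 1) + c i * dt m)
          *v (DU' (m - 1) h + (\<Sum>j = 1..i. a i j *\<^sub>R DK' m j h)))"
      proof (cases "m = Suc n")
        case True
        then show ?thesis using E2 i by (simp add: DU'_def DK'_def tt_def)
      next
        case False
        then have "m \<in> {1..n}" using m by auto
        then show ?thesis using IH4 i False by (auto simp: DU'_def DK'_def)
      qed
    qed
  qed
  obtain DU DK where
      H1: "\<forall>m\<le>Nt. ((\<lambda>v. Us v m) has_derivative DU m) (at (u 0))" and H2: "DU 0 = (\<lambda>h. h)" and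
      H4: "\<forall>m\<in>{1..Nt}. \<forall>h. DU m h = DU (m - 1) h + (\<Sum>i = 1..s. b i *\<^sub>R DK m i h) \<and>
        (\<forall>i\<in>{1..s}. M *v DK m i h = dt m *\<^sub>R (Jr (stage a u k m i) mu (tgrid dt (m - 1) + c i * dt m)
          *v (DU (m - 1) h + (\<Sum>j = 1..i. a i j *\<^sub>R DK m j h))))"
    using H[of Nt] by auto
  have "DU Nt = (\<lambda>h. J *v h)" using H1 flow_deriv has_derivative_unique by blast
  then show ?thesis
    using H2 H4 by (intro exI[of _ "\<lambda>m. DU m \<delta>"] exI[of _ "\<lambda>m i. DK m i \<delta>"]) auto
qed



definition steps :: "real^'n^'n \<Rightarrow> (real^'n \<Rightarrow> real^'m \<Rightarrow> real \<Rightarrow> real^'n^'n)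
    \<Rightarrow> (nat \<Rightarrow> nat \<Rightarrow> real) \<Rightarrow> (nat \<Rightarrow> real) \<Rightarrow> (nat \<Rightarrow> real) \<Rightarrow> (nat \<Rightarrow> real)
    \<Rightarrow> real^'m \<Rightarrow> nat \<Rightarrow> nat \<Rightarrow> (nat \<Rightarrow> real^'n) \<Rightarrow> (nat \<Rightarrow> nat \<Rightarrow> real^'n)
    \<Rightarrow> (nat \<Rightarrow> real^'n) \<Rightarrow> (nat \<Rightarrow> nat \<Rightarrow> real^'n)
    \<Rightarrow> (nat \<Rightarrow> real^'n) \<Rightarrow> (nat \<Rightarrow> nat \<Rightarrow> real^'n) \<Rightarrow> bool" where
  "steps M Jr a b c dt mu Nt s u k gu gk lam kap \<longleftrightarrow>
     (\<forall>n \<in> {1..Nt}.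
        lam (n - 1) = lam n + gu (n - 1) +
          (\<Sum>i = 1..s. dt n *\<^sub>R
             (transpose (Jr (stage a u k n i) mu (tgrid dt (n - 1) + c i * dt n)) *v kap n i)) \<and>
        (\<forall>i \<in> {1..s}.
           transpose M *v kap n i = gk n i + b i *\<^sub>R lam n +
             (\<Sum>j = i..s. (a j i * dt n) *\<^sub>R
                (transpose (Jr (stage a u k n j) mu (tgrid dt (n - 1) + c j * dt n)) *v kap n j))))"

lemma adj_iff: "adjoint_sys M Jr a b c dt mu Nt s u k gu gk lam kap \<longleftrightarrow>
   lam Nt = lam 0 + gu Nt \<and> steps M Jr a b c dt mu Nt s u k gu gk lam kap"
  unfolding adjoint_sys_def steps_def by simp

lemma BU:
  assumes inv: "\<And>n i. n \<in> {1..Nt} \<Longrightarrow> i \<in> {1..s} \<Longrightarrow>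
          invertible (M - (a i i * dt n) *\<^sub>R Jr (stage a u k n i) mu (tgrid dt (n - 1) + c i * dt n))"
    and S: "steps M Jr a b c dt mu Nt s u k gu gk lam kap"
    and S': "steps M Jr a b c dt mu Nt s u k gu gk lam' kap'"
    and eqN: "lam Nt = lam' Nt"
  shows "(\<forall>n\<le>Nt. lam n = lam' n) \<and> (\<forall>n\<in>{1..Nt}. \<forall>i\<in>{1..s}. kap n i = kap' n i)"
proof -
  have claim: "lam (Nt - m) = lam' (Nt - m) \<and> (\<forall>n\<in>{1..Nt}. Nt - m < n \<longrightarrow> (\<forall>i\<in>{1..s}. kap n i = kap' n i))"
    if "m \<le> Nt" for m
    using that
  proof (induction m)
    case 0 then show ?case using eqN by auto
  next
    case (Suc m)
    then have IH1: "lam (Nt - m) = lam' (Nt - m)"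
      and IH2: "\<forall>n\<in>{1..Nt}. Nt - m < n \<longrightarrow> (\<forall>i\<in>{1..s}. kap n i = kap' n i)" by auto
    define n0 where "n0 = Nt - m"
    have n0: "n0 \<in> {1..Nt}" using Suc.prems by (auto simp: n0_def)
    define A where "A j = Jr (stage a u k n0 j) mu (tgrid dt (n0 - 1) + c j * dt n0)" for j
    have T: "\<forall>i\<in>{1..s}. tri_eq M A (\<lambda>j i. a j i * dt n0) s (\<lambda>i. gk n0 i + b i *\<^sub>R lam n0) (kap n0) i"
      using S n0 unfolding steps_def tri_eq_def A_def by blast
    have T': "\<forall>i\<in>{1..s}. tri_eq M A (\<lambda>j i. a j i * dt n0) s (\<lambda>i. gk n0 i + b i *\<^sub>R lam n0) (kap' n0) i"
      using S' n0 IH1 unfolding steps_def tri_eq_def A_def n0_def by auto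
    have K: "\<forall>i\<in>{1..s}. kap n0 i = kap' n0 i"
      by (rule tri_unique[OF _ T T']) (use inv n0 in \<open>auto simp: A_def\<close>)
    have "lam (n0 - 1) = lam n0 + gu (n0 - 1) +
          (\<Sum>i = 1..s. dt n0 *\<^sub>R (transpose (A i) *v kap n0 i))"
      using S n0 unfolding steps_def A_def by blast
    also have "\<dots> = lam' n0 + gu (n0 - 1) + (\<Sum>i = 1..s. dt n0 *\<^sub>R (transpose (A i) *v kap' n0 i))"
      using K IH1 unfolding n0_def by (auto intro!: sum.cong simp del: transpose_matrix_vector)
    also have "\<dots> = lam' (n0 - 1)"
      using S' n0 unfolding steps_def A_def by auto
    finally have L: "lam (Nt - Suc m) = lam' (Nt - Suc m)" by (simp add: n0_def)
    show ?case
    proof (intro conjI L ballI impI)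
      fix n i assume n: "n \<in> {1..Nt}" "Nt - Suc m < n" and i: "i \<in> {1..s}"
      show "kap n i = kap' n i"
      proof (cases "n = n0")
        case True then show ?thesis using K i by simp
      next
        case False then have "Nt - m < n" using n Suc.prems by (auto simp: n0_def)
        then show ?thesis using IH2 n i by auto
      qed
    qed
  qed
  show ?thesis
  proof (intro conjI allI impI ballI)
    fix n assume "n \<le> Nt"
    then show "lam n = lam' n" using claim[of "Nt - n"] by simp
  next
    fix n i assume "n \<in> {1..Nt}" "i \<in> {1..s}"
    then show "kap n i = kap' n i" using claim[of Nt] by auto
  qed
qed

lemma BE:
  assumes inv: "\<And>n i. n \<in> {1..Nt} \<Longrightarrow> i \<in> {1..s} \<Longrightarrow>
          invertible (M - (a i i * dt n) *\<^sub>R Jr (stage a u k n i) mu (tgrid dt (n - 1) + c i * dt n))"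
  shows "\<exists>lam kap. lam Nt = x \<and> steps M Jr a b c dt mu Nt s u k gu gk lam kap"
proof -
  define P where "P lam kap n \<longleftrightarrow> lam (n - 1) = lam n + gu (n - 1) +
          (\<Sum>i = 1..s. dt n *\<^sub>R
             (transpose (Jr (stage a u k n i) mu (tgrid dt (n - 1) + c i * dt n)) *v kap n i)) \<and>
        (\<forall>i \<in> {1..s}.
           transpose M *v kap n i = gk n i + b i *\<^sub>R lam n +
             (\<Sum>j = i..s. (a j i * dt n) *\<^sub>R
                (transpose (Jr (stage a u k n j) mu (tgrid dt (n - 1) + c j * dt n)) *v kap n j)))"
    for lam :: "nat \<Rightarrow> real^'a" and kap n
  have claim: "\<exists>lam kap. lam Nt = x \<and> (\<forall>n\<in>{1..Nt}. Nt - m < n \<longrightarrow> P lam kap n)" if "m \<le> Nt" for m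
    using that
  proof (induction m)
    case 0 show ?case by (intro exI[of _ "\<lambda>_. x"]) auto
  next
    case (Suc m)
    then obtain lam kap where L: "lam Nt = x" and LP: "\<forall>n\<in>{1..Nt}. Nt - m < n \<longrightarrow> P lam kap n" by auto
    define n0 where "n0 = Nt - m"
    have n0: "n0 \<in> {1..Nt}" using Suc.prems by (auto simp: n0_def)
    define A where "A j = Jr (stage a u k n0 j) mu (tgrid dt (n0 - 1) + c j * dt n0)" for j
    obtain K where K: "\<forall>i\<in>{1..s}. tri_eq M A (\<lambda>j i. a j i * dt n0) s (\<lambda>i. gk n0 i + b i *\<^sub>R lam n0) K i"
      using tri_exists[of s M "\<lambda>j i. a j i * dt n0" A] inv n0 unfolding A_def by blast
    define kap' where "kap' = kap(n0 := K)"
    define lam' where "lam' = lam(n0 - 1 := lam n0 + gu (n0 - 1) +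
          (\<Sum>i = 1..s. dt n0 *\<^sub>R (transpose (A i) *v K i)))"
    have ne: "n0 - 1 \<noteq> n0" "n0 - 1 \<noteq> Nt" using n0 by auto
    show ?case
    proof (intro exI[of _ lam'] exI[of _ kap'] conjI ballI impI)
      show "lam' Nt = x" using L ne by (simp add: lam'_def)
    next
      fix n assume n: "n \<in> {1..Nt}" "Nt - Suc m < n"
      show "P lam' kap' n"
      proof (cases "n = n0")
        case True
        then show ?thesis using K ne unfolding P_def lam'_def kap'_def tri_eq_def A_def by simp
      next
        case False then have nm: "Nt - m < n" using n Suc.prems by (auto simp: n0_def)
        then have "P lam kap n" using LP n by auto
        moreover have "lam' n = lam n" "lam' (n - 1) = lam (n - 1)" "kap' n = kap n"
          using nm n False Suc.prems by (auto simp: lam'_def kap'_def n0_def)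
        ultimately show ?thesis unfolding P_def by simp
      qed
    qed
  qed
  from claim[of Nt] show ?thesis unfolding steps_def P_def by auto
qed


lemma global_dual:
  assumes S: "steps M Jr a b c dt mu Nt s u k gu gk lam kap"
    and tan: "\<forall>n\<in>{1..Nt}. du n = du (n - 1) + (\<Sum>i = 1..s. b i *\<^sub>R dk n i) \<and>
      (\<forall>i\<in>{1..s}. M *v dk n i = dt n *\<^sub>R (Jr (stage a u k n i) mu (tgrid dt (n - 1) + c i * dt n)
          *v (du (n - 1) + (\<Sum>j = 1..i. a i j *\<^sub>R dk n j))))"
  shows "lam 0 \<bullet> du 0 = lam Nt \<bullet> du Nt + (\<Sum>n = 1..Nt. gu (n - 1) \<bullet> du (n - 1) + (\<Sum>i = 1..s. gk n i \<bullet> dk n i))"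
proof -
  have "lam 0 \<bullet> du 0 = lam N \<bullet> du N + (\<Sum>n = 1..N. gu (n - 1) \<bullet> du (n - 1) + (\<Sum>i = 1..s. gk n i \<bullet> dk n i))"
    if "N \<le> Nt" for N
    using that
  proof (induction N)
    case 0 then show ?case by simp
  next
    case (Suc N)
    have nN: "Suc N \<in> {1..Nt}" using Suc.prems by simp
    define A where "A i = Jr (stage a u k (Suc N) i) mu (tgrid dt N + c i * dt (Suc N))" for i
    have fw: "\<forall>i\<in>{1..s}. M *v dk (Suc N) i = dt (Suc N) *\<^sub>R (A i *v (du N + (\<Sum>j = 1..i. a i j *\<^sub>R dk (Suc N) j)))"
      using tan nN unfolding A_def by (auto simp del: transpose_matrix_vector)
    have adj: "\<forall>i\<in>{1..s}. transpose M *v kap (Suc N) i = gk (Suc N) i + b i *\<^sub>R lam (Suc N) +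
        (\<Sum>j = i..s. (a j i * dt (Suc N)) *\<^sub>R (transpose (A j) *v kap (Suc N) j))"
      using S nN unfolding steps_def A_def by (auto simp del: transpose_matrix_vector)
    have L0: "lam (Suc N - 1) = lam (Suc N) + gu (Suc N - 1) + (\<Sum>i = 1..s. dt (Suc N) *\<^sub>R
        (transpose (Jr (stage a u k (Suc N) i) mu (tgrid dt (Suc N - 1) + c i * dt (Suc N))) *v kap (Suc N) i))"
      using S nN unfolding steps_def by blast
    have lamN: "lam N = lam (Suc N) + gu N + (\<Sum>i = 1..s. dt (Suc N) *\<^sub>R (transpose (A i) *v kap (Suc N) i))"
      using L0 unfolding A_def by (simp del: transpose_matrix_vector)
    have duN: "du (Suc N) = du N + (\<Sum>i = 1..s. b i *\<^sub>R dk (Suc N) i)" using tan nN by auto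
    have D: "(\<Sum>i = 1..s. dt (Suc N) *\<^sub>R (transpose (A i) *v kap (Suc N) i)) \<bullet> du N =
        (\<Sum>i = 1..s. gk (Suc N) i \<bullet> dk (Suc N) i) + lam (Suc N) \<bullet> (\<Sum>i = 1..s. b i *\<^sub>R dk (Suc N) i)"
      by (rule step_dual[OF fw adj])
    have "lam N \<bullet> du N = lam (Suc N) \<bullet> du (Suc N) + (gu N \<bullet> du N + (\<Sum>i = 1..s. gk (Suc N) i \<bullet> dk (Suc N) i))"
      unfolding lamN duN inner_add_left inner_add_right D by simp
    then show ?case using Suc by simp
  qed
  from this[of Nt] show ?thesis by simp
qed

lemma vec_eq_dot: "(\<And>d. (p::real^'n) \<bullet> d = q \<bullet> d) \<Longrightarrow> p = q"
proof -
  assume h: "\<And>d. p \<bullet> d = q \<bullet> d"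
  have "(p - q) \<bullet> (p - q) = 0" using h[of "p - q"] by (simp add: inner_diff_left)
  then show "p = q" by simp
qed

lemma transpose_diff: "transpose (A - (B::real^'n^'n)) = transpose A - transpose B"
  by (simp add: transpose_def vec_eq_iff)

theorem mainTheorem1:
  fixes M :: "real^'n^'n"
    and r :: "real^'n \<Rightarrow> real^'m \<Rightarrow> real \<Rightarrow> real^'n"
    and Jr :: "real^'n \<Rightarrow> real^'m \<Rightarrow> real \<Rightarrow> real^'n^'n"
    and a :: "nat \<Rightarrow> nat \<Rightarrow> real" and b c dt :: "nat \<Rightarrow> real"
    and Nt s :: nat and mu :: "real^'m"
    and u :: "nat \<Rightarrow> real^'n" and k :: "nat \<Rightarrow> nat \<Rightarrow> real^'n"
    and F :: "(nat \<Rightarrow> real^'n) \<Rightarrow> (nat \<Rightarrow> nat \<Rightarrow> real^'n) \<Rightarrow> real^'m \<Rightarrow> real"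
    and Gu :: "(nat \<Rightarrow> real^'n) \<Rightarrow> (nat \<Rightarrow> nat \<Rightarrow> real^'n) \<Rightarrow> real^'m \<Rightarrow> nat \<Rightarrow> real^'n"
    and Gk :: "(nat \<Rightarrow> real^'n) \<Rightarrow> (nat \<Rightarrow> nat \<Rightarrow> real^'n) \<Rightarrow> real^'m \<Rightarrow> nat \<Rightarrow> nat \<Rightarrow> real^'n"
    and Gm :: "(nat \<Rightarrow> real^'n) \<Rightarrow> (nat \<Rightarrow> nat \<Rightarrow> real^'n) \<Rightarrow> real^'m \<Rightarrow> real^'m"
    and V :: "(real^'n) set"
    and Us :: "real^'n \<Rightarrow> nat \<Rightarrow> real^'n"
    and Ks :: "real^'n \<Rightarrow> nat \<Rightarrow> nat \<Rightarrow> real^'n"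
    and J :: "real^'n^'n"
  assumes Nt_pos: "0 < Nt" and s_pos: "0 < s"
    and r_C1: "\<exists>D :: (real^'n) \<times> (real^'m) \<times> real \<Rightarrow> ((real^'n) \<times> (real^'m) \<times> real) \<Rightarrow>\<^sub>L (real^'n).
                 (\<forall>x. ((\<lambda>(v, m, t). r v m t) has_derivative blinfun_apply (D x)) (at x))
                 \<and> continuous_on UNIV D"
    and Jr: "\<And>v m t. ((\<lambda>w. r w m t) has_derivative (\<lambda>h. Jr v m t *v h)) (at v)"
    and dirk_lower: "\<And>i j. i \<in> {1..s} \<Longrightarrow> j \<in> {1..s} \<Longrightarrow> i < j \<Longrightarrow> a i j = 0"
    and dt_pos: "\<And>n. n \<in> {1..Nt} \<Longrightarrow> 0 < dt n"
    and sol: "dirk_eqs M r a b c dt mu Nt s u k"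
    and periodic: "u 0 = u Nt"
    and stage_nonsing: "\<And>n i. n \<in> {1..Nt} \<Longrightarrow> i \<in> {1..s} \<Longrightarrow>
          invertible (M - (a i i * dt n) *\<^sub>R Jr (stage a u k n i) mu (tgrid dt (n - 1) + c i * dt n))"
    and F_C1: "F_C1 Nt s F Gu Gk Gm"
    and V_open: "open V" and V_mem: "u 0 \<in> V"
    and flow_init: "\<And>v. v \<in> V \<Longrightarrow> Us v 0 = v"
    and flow_eqs: "\<And>v. v \<in> V \<Longrightarrow> dirk_eqs M r a b c dt mu Nt s (Us v) (Ks v)"
    and flow_branch: "\<And>n i. n \<in> {1..Nt} \<Longrightarrow> i \<in> {1..s} \<Longrightarrow>
          Ks (u 0) n i = k n i \<and> continuous (at (u 0)) (\<lambda>v. Ks v n i)"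
    and flow_deriv: "((\<lambda>v. Us v Nt) has_derivative (\<lambda>h. J *v h)) (at (u 0))"
    and jac_nonsing: "invertible (J - mat 1)"
  shows "\<exists>lam kap. adjoint_sys M Jr a b c dt mu Nt s u k (Gu u k mu) (Gk u k mu) lam kap \<and>
           (\<forall>lam' kap'. adjoint_sys M Jr a b c dt mu Nt s u k (Gu u k mu) (Gk u k mu) lam' kap' \<longrightarrow>
              (\<forall>n \<le> Nt. lam' n = lam n) \<and>
              (\<forall>n \<in> {1..Nt}. \<forall>i \<in> {1..s}. kap' n i = kap n i))"
  
proof -
  define gu where "gu = Gu u k mu"
  define gk where "gk = Gk u k mu"
  define St where "St lam kap \<longleftrightarrow> steps M Jr a b c dt mu Nt s u k gu gk lam kap" for lam kap
  have ex: "\<exists>p. fst p Nt = x \<and> St (fst p) (snd p)" for x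
    using BE[where Nt=Nt and s=s and M=M and a=a and dt=dt and Jr=Jr and u=u and k=k and mu=mu and c=c and b=b and gu=gu and gk=gk and x=x, OF stage_nonsing] unfolding St_def by auto
  define so where "so x = (SOME p. fst p Nt = x \<and> St (fst p) (snd p))" for x
  have soP: "fst (so x) Nt = x \<and> St (fst (so x)) (snd (so x))" for x
    unfolding so_def by (rule someI_ex[OF ex])
  define T where "T x = fst (so x) 0" for x
  have dualT: "\<exists>C. \<forall>lam kap. St lam kap \<longrightarrow> lam 0 \<bullet> \<delta> = lam Nt \<bullet> (J *v \<delta>) + C" for \<delta>
  proof -
    obtain du dk where t1: "du 0 = \<delta>" and t2: "du Nt = J *v \<delta>" and
      t3: "\<forall>n\<in>{1..Nt}. du n = du (n - 1) + (\<Sum>i = 1..s. b i *\<^sub>R dk n i) \<and>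
      (\<forall>i\<in>{1..s}. M *v dk n i = dt n *\<^sub>R (Jr (stage a u k n i) mu (tgrid dt (n - 1) + c i * dt n)
          *v (du (n - 1) + (\<Sum>j = 1..i. a i j *\<^sub>R dk n j))))"
      using tangent[OF Jr sol stage_nonsing V_open V_mem flow_init flow_eqs flow_branch flow_deriv, of \<delta>]
      by blast
    show ?thesis
    proof (intro exI[of _ "\<Sum>n = 1..Nt. gu (n - 1) \<bullet> du (n - 1) + (\<Sum>i = 1..s. gk n i \<bullet> dk n i)"] allI impI)
      fix lam kap assume "St lam kap"
      show "lam 0 \<bullet> \<delta> = lam Nt \<bullet> (J *v \<delta>) + (\<Sum>n = 1..Nt. gu (n - 1) \<bullet> du (n - 1) + (\<Sum>i = 1..s. gk n i \<bullet> dk n i))"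
      proof -
        have G: "lam 0 \<bullet> du 0 = lam Nt \<bullet> du Nt + (\<Sum>n = 1..Nt. gu (n - 1) \<bullet> du (n - 1) + (\<Sum>i = 1..s. gk n i \<bullet> dk n i))"
          by (rule global_dual[where M=M and Jr=Jr and a=a and b=b and c=c and dt=dt and mu=mu and Nt=Nt and s=s
            and u=u and k=k and du=du and dk=dk and gu=gu and gk=gk and lam=lam and kap=kap, OF _ t3])
            (use \<open>St lam kap\<close> in \<open>simp only: St_def\<close>)
        then show ?thesis by (simp only: t1 t2)
      qed
    qed
  qed
  have Tlin: "T x - T y = transpose J *v (x - y)" for x y
  proof (rule vec_eq_dot)
    fix d
    obtain C where C: "\<forall>lam kap. St lam kap \<longrightarrow> lam 0 \<bullet> d = lam Nt \<bullet> (J *v d) + C" using dualT by blast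
    have "T x \<bullet> d = x \<bullet> (J *v d) + C" using C soP[of x] unfolding T_def by auto
    moreover have "T y \<bullet> d = y \<bullet> (J *v d) + C" using C soP[of y] unfolding T_def by auto
    ultimately show "(T x - T y) \<bullet> d = (transpose J *v (x - y)) \<bullet> d"
      by (simp only: tdot inner_diff_left)
  qed
  obtain Ci where Ci1: "(transpose J - mat 1) ** Ci = mat 1" and Ci2: "Ci ** (transpose J - mat 1) = mat 1"
    using transpose_invertible[OF jac_nonsing] unfolding transpose_diff transpose_mat invertible_def by blast
  define x0 where "x0 = Ci *v (- (T 0 + gu Nt))"
  have "(transpose J - mat 1) *v x0 = - (T 0 + gu Nt)"
    unfolding x0_def by (simp add: matrix_vector_mul_assoc Ci1 del: transpose_matrix_vector)
  then have "transpose J *v x0 - x0 = - (T 0 + gu Nt)"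
    by (simp add: matrix_vector_mult_diff_rdistrib del: transpose_matrix_vector)
  moreover have "T x0 = transpose J *v x0 + T 0" using Tlin[of x0 0] by (simp add: algebra_simps del: transpose_matrix_vector)
  ultimately have fix0: "x0 = T x0 + gu Nt" by (simp add: algebra_simps del: transpose_matrix_vector)
  define lam where "lam = fst (so x0)"
  define kap where "kap = snd (so x0)"
  have Slk: "St lam kap" and lamN: "lam Nt = x0" using soP[of x0] unfolding lam_def kap_def by auto
  have adj: "adjoint_sys M Jr a b c dt mu Nt s u k gu gk lam kap"
    unfolding adj_iff using Slk lamN fix0 unfolding St_def T_def lam_def by simp
  show ?thesis
    unfolding gu_def[symmetric] gk_def[symmetric]
  proof (rule exI[of _ lam], rule exI[of _ kap], rule conjI[OF adj], intro allI impI)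
    fix lam' kap' assume A': "adjoint_sys M Jr a b c dt mu Nt s u k gu gk lam' kap'"
    then have S': "St lam' kap'" and e': "lam' Nt = lam' 0 + gu Nt" unfolding adj_iff St_def by auto
    define x' where "x' = lam' Nt"
    have Bx: "(\<forall>n\<le>Nt. lam' n = fst (so x') n) \<and> (\<forall>n\<in>{1..Nt}. \<forall>i\<in>{1..s}. kap' n i = snd (so x') n i)"
      by (rule BU[where Nt=Nt and s=s and M=M and a=a and dt=dt and Jr=Jr and u=u and k=k and mu=mu and c=c and b=b and gu=gu and gk=gk and lam=lam' and kap=kap' and lam'="fst (so x')" and kap'="snd (so x')", OF stage_nonsing])
        (use S' soP[of x'] in \<open>simp_all only: St_def x'_def\<close>)
    then have "lam' 0 = T x'" unfolding T_def by simp
    then have fx': "x' = T x' + gu Nt" using e' unfolding x'_def by simp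
    have "x' - x0 = (T x' + gu Nt) - (T x0 + gu Nt)" using fx' fix0 by simp
    also have "\<dots> = T x' - T x0" by simp
    finally have "x' - x0 = transpose J *v (x' - x0)" using Tlin[of x' x0] by simp
    then have "(transpose J - mat 1) *v (x' - x0) = 0"
      by (simp add: matrix_vector_mult_diff_rdistrib del: transpose_matrix_vector)
    then have "Ci *v ((transpose J - mat 1) *v (x' - x0)) = 0" by simp
    then have "x' = x0" by (simp add: matrix_vector_mul_assoc Ci2 del: transpose_matrix_vector)
    then have "lam' Nt = lam Nt" using lamN x'_def by simp
    then have R: "(\<forall>n\<le>Nt. lam' n = lam n) \<and> (\<forall>n\<in>{1..Nt}. \<forall>i\<in>{1..s}. kap' n i = kap n i)"
      by (intro BU[where Nt=Nt and s=s and M=M and a=a and dt=dt and Jr=Jr and u=u and k=k and mu=mu and c=c and b=b and gu=gu and gk=gk and lam=lam' and kap=kap' and lam'=lam and kap'=kap, OF stage_nonsing])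
        (use S' Slk in \<open>simp_all only: St_def\<close>)
    then show "(\<forall>n\<le>Nt. lam' n = lam n) \<and> (\<forall>n\<in>{1..Nt}. \<forall>i\<in>{1..s}. kap' n i = kap n i)" .
  qed
qed

end
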